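(* Let $H$ be a bounded strongly planar embedding of a marked poset $(P,A,\lambda)$, and let $F$ be a bounded face of $H$ not containing either of the two additional edges joining $\hat0$ and $\hat1$. Suppose the left boundary of $F$ is the chain $p_1>p_2>\cdots>p_k$ and the right boundary is $p_1=q_1>q_2>\cdots>q_\ell=p_k$. Let $L_1,\dots,L_{\mathcal N}$, $\mathcal N=\binom{k+\ell-4}{\ell-2}$, be the total orders on $\{p_1,\dots,p_k,q_2,\dots,q_{\ell-1}\}$ extending both chains, and let $\widehat P_j$ be the poset on $\widehat P$ whose order is generated by the order of $\widehat P$ together with $L_j$. Then $\bigcup_{j=1}^{\mathcal N}\mathcal{O}(\widehat P_j,\widehat A)_\lambda=\mathcal{O}(\widehat P,\widehat A)_\lambda$, and for $i\ne j$ the intersection $\mathcal{O}(\widehat P_i,\widehat A)_\lambda\cap\mathcal{O}(\widehat P_j,\widehat A)_\lambda$ is a common face of both polytopes (possibly empty); i.e. these polytopes form a subdivision of $\mathcal{O}(\widehat P,\widehat A)_\lambda$.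
   Context: A marked poset $(P,A,\lambda)$ consists of a finite poset $P$, a subposet $A\subseteq P$ containing all minimal and all maximal elements of $P$, and an order-preserving map $\lambda:A\to\mathbb{R}$. For a poset $Q$, $B\subseteq Q$ and $\mu:B\to\mathbb{R}$, $\mathcal{O}(Q,B)_\mu=\{x\in\mathbb{R}^Q:x_p\le x_q\text{ for }p<q\text{ in }Q,\ x_b=\mu(b)\text{ for }b\in B\}$. Let $\widehat P=P\sqcup\{\hat0,\hat1\}$ with $\hat0<p<\hat1$ for all $p\in P$, $\widehat A=A\cup\{\hat0,\hat1\}$, and extend $\lambda$ by $\lambda(\hat0)=\min_{a\in A}\lambda(a)$, $\lambda(\hat1)=\max_{a\in A}\lambda(a)$ (so $\mathcal{O}(\widehat P,\widehat A)_\lambda$ is $\mathcal{O}(P,A)_\lambda$ with two fixed coordinates appended); elements of $\widehat A$ are called marked. $P$ is strongly planar if the Hasse diagram of $\widehat P$ has a planar drawing in which $y$-coordinates strictly increase along every covering relation. A bounded embedding $H$ is such a drawing together with two additional edges joining $\hat0$ and $\hat1$, one drawn to the left of everything else and one to the right, regarded as a plane graph. For a bounded face $F$ of $H$, $\min F$ and $\max F$ are the least and greatest elements of $\widehat P$ on its boundary; removing them splits the boundary into two paths, and the left (resp. right) boundary of $F$ is the left (resp. right) path together with $\min F$ and $\max F$ (each is a saturated chain). $H$ is a bounded strongly planar embedding of $(P,A,\lambda)$ if for every bounded face $F$ whose left boundary contains an element of $\widehat A$, both $\min F$ and $\max F$ lie in $\widehat A$. *)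

theory Defs
  imports "HOL-Analysis.Analysis"
begin

text \<open>A finite poset P is modelled as a finite type with a partial order.
  P-hat = P plus a new bottom and a new top element.\<close>

datatype 'a ext = Bot | El 'a | Top

lemma UNIV_ext: "(UNIV :: 'a ext set) = {Bot, Top} \<union> range El"
  by (auto intro: ext.exhaust)

instance ext :: (finite) finite
  by standard (simp add: UNIV_ext)

fun hle :: "'a::order ext \<Rightarrow> 'a ext \<Rightarrow> bool" where
  "hle Bot _ = True"
| "hle (El a) Bot = False"
| "hle (El a) (El b) = (a \<le> b)"
| "hle (El a) Top = True"
| "hle Top b = (b = Top)"

definition hlt :: "'a::order ext \<Rightarrow> 'a ext \<Rightarrow> bool" where
  "hlt a b \<longleftrightarrow> hle a b \<and> a \<noteq> b"

definition hrel :: "('a::order ext \<times> 'a ext) set" where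
  "hrel = {(a, b). hlt a b}"

definition marked_poset :: "'a::{finite,order} set \<Rightarrow> ('a \<Rightarrow> real) \<Rightarrow> bool" where
  "marked_poset A lam \<longleftrightarrow>
     (\<forall>p. (\<forall>q. \<not> q < p) \<longrightarrow> p \<in> A) \<and>
     (\<forall>p. (\<forall>q. \<not> p < q) \<longrightarrow> p \<in> A) \<and>
     (\<forall>a\<in>A. \<forall>b\<in>A. a \<le> b \<longrightarrow> lam a \<le> lam b)"

definition Ahat :: "'a set \<Rightarrow> 'a ext set" where
  "Ahat A = {Bot, Top} \<union> El ` A"

fun lamhat :: "'a set \<Rightarrow> ('a \<Rightarrow> real) \<Rightarrow> 'a ext \<Rightarrow> real" where
  "lamhat A lam Bot = Min (lam ` A)"
| "lamhat A lam (El a) = lam a"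
| "lamhat A lam Top = Max (lam ` A)"

text \<open>Marked order polytope O(Q,B)_mu in R^Q, where the order of Q is
  given by the (strict) relation R on the finite index type.\<close>

definition order_poly ::
  "('b::finite \<times> 'b) set \<Rightarrow> 'b set \<Rightarrow> ('b \<Rightarrow> real) \<Rightarrow> (real ^ 'b) set" where
  "order_poly R B mu = {x. (\<forall>(p, q)\<in>R. x $ p \<le> x $ q) \<and> (\<forall>b\<in>B. x $ b = mu b)}"

definition covers :: "'a::order ext \<Rightarrow> 'a ext \<Rightarrow> bool" where
  "covers a b \<longleftrightarrow> hlt a b \<and> \<not> (\<exists>c. hlt a c \<and> hlt c b)"

definition up_arc :: "(real \<Rightarrow> complex) \<Rightarrow> complex \<Rightarrow> complex \<Rightarrow> bool" where
  "up_arc g z w \<longleftrightarrow> arc g \<and> pathstart g = z \<and> pathfinish g = w \<and>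
     (\<forall>s\<in>{0..1}. \<forall>t\<in>{0..1}. s < t \<longrightarrow> Im (g s) < Im (g t))"

datatype 'a edge_id = Cov "'a ext" "'a ext" | LeftE | RightE

definition edge_ids :: "'a::order edge_id set" where
  "edge_ids = {Cov a b | a b. covers a b} \<union> {LeftE, RightE}"

fun ends :: "'a edge_id \<Rightarrow> 'a ext set" where
  "ends (Cov a b) = {a, b}"
| "ends LeftE = {Bot, Top}"
| "ends RightE = {Bot, Top}"

fun path_of ::
  "('a ext \<Rightarrow> 'a ext \<Rightarrow> real \<Rightarrow> complex) \<Rightarrow> (real \<Rightarrow> complex) \<Rightarrow> (real \<Rightarrow> complex)
    \<Rightarrow> 'a edge_id \<Rightarrow> real \<Rightarrow> complex" where
  "path_of edge eL eR (Cov a b) = edge a b"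
| "path_of edge eL eR LeftE = eL"
| "path_of edge eL eR RightE = eR"

definition drawing where
  "drawing pos edge eL eR =
     range pos \<union> (\<Union>e\<in>edge_ids. path_image (path_of edge eL eR e))"

text \<open>A bounded embedding: vertices at distinct points of the plane (complex
  numbers, y = Im), every covering relation drawn as an upward arc, the two
  additional edges joining Bot and Top drawn as upward arcs, edges meet only
  at common endpoints and pass through no other vertex, and the additional
  edge eL (eR) lies to the left (right) of everything else.\<close>
definition bounded_embedding ::
  "('a::order ext \<Rightarrow> complex) \<Rightarrow> ('a ext \<Rightarrow> 'a ext \<Rightarrow> real \<Rightarrow> complex)
     \<Rightarrow> (real \<Rightarrow> complex) \<Rightarrow> (real \<Rightarrow> complex) \<Rightarrow> bool" where
  "bounded_embedding pos edge eL eR \<longleftrightarrow>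
     inj pos \<and>
     (\<forall>a b. covers a b \<longrightarrow> up_arc (edge a b) (pos a) (pos b)) \<and>
     up_arc eL (pos Bot) (pos Top) \<and> up_arc eR (pos Bot) (pos Top) \<and>
     (\<forall>e\<in>edge_ids. \<forall>e'\<in>edge_ids. e \<noteq> e' \<longrightarrow>
        path_image (path_of edge eL eR e) \<inter> path_image (path_of edge eL eR e')
          \<subseteq> pos ` (ends e \<inter> ends e')) \<and>
     (\<forall>e\<in>edge_ids. \<forall>v. pos v \<in> path_image (path_of edge eL eR e) \<longrightarrow> v \<in> ends e) \<and>
     (\<forall>z\<in>drawing pos edge eL eR. z \<notin> path_image eL \<longrightarrow>
        (\<forall>w\<in>path_image eL. Im w = Im z \<longrightarrow> Re w < Re z)) \<and>
     (\<forall>z\<in>drawing pos edge eL eR. z \<notin> path_image eR \<longrightarrow>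
        (\<forall>w\<in>path_image eR. Im w = Im z \<longrightarrow> Re z < Re w))"

definition bounded_faces where
  "bounded_faces pos edge eL eR =
     {F \<in> components (- drawing pos edge eL eR). bounded F}"

definition bdry_elems :: "('a ext \<Rightarrow> complex) \<Rightarrow> complex set \<Rightarrow> 'a ext set" where
  "bdry_elems pos F = {v. pos v \<in> frontier F}"

definition face_min :: "('a::order ext \<Rightarrow> complex) \<Rightarrow> complex set \<Rightarrow> 'a ext" where
  "face_min pos F = (THE v. v \<in> bdry_elems pos F \<and> (\<forall>w\<in>bdry_elems pos F. hle v w))"

definition face_max :: "('a::order ext \<Rightarrow> complex) \<Rightarrow> complex set \<Rightarrow> 'a ext" where
  "face_max pos F = (THE v. v \<in> bdry_elems pos F \<and> (\<forall>w\<in>bdry_elems pos F. hle w v))"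

text \<open>Left boundary: min F, max F, and the boundary elements having the face
  immediately to their right; symmetrically for the right boundary.\<close>
definition left_bd :: "('a::order ext \<Rightarrow> complex) \<Rightarrow> complex set \<Rightarrow> 'a ext set" where
  "left_bd pos F =
     {v \<in> bdry_elems pos F. \<exists>\<epsilon>>0. \<forall>t. 0 < t \<and> t < \<epsilon> \<longrightarrow> pos v + complex_of_real t \<in> F}
     \<union> {face_min pos F, face_max pos F}"

definition right_bd :: "('a::order ext \<Rightarrow> complex) \<Rightarrow> complex set \<Rightarrow> 'a ext set" where
  "right_bd pos F =
     {v \<in> bdry_elems pos F. \<exists>\<epsilon>>0. \<forall>t. 0 < t \<and> t < \<epsilon> \<longrightarrow> pos v - complex_of_real t \<in> F}
     \<union> {face_min pos F, face_max pos F}"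

definition face_has_edge where
  "face_has_edge edge eL eR F e \<longleftrightarrow> path_image (path_of edge eL eR e) \<subseteq> frontier F"

definition bounded_spe ::
  "'a::order set \<Rightarrow> ('a ext \<Rightarrow> complex) \<Rightarrow> ('a ext \<Rightarrow> 'a ext \<Rightarrow> real \<Rightarrow> complex)
     \<Rightarrow> (real \<Rightarrow> complex) \<Rightarrow> (real \<Rightarrow> complex) \<Rightarrow> bool" where
  "bounded_spe A pos edge eL eR \<longleftrightarrow>
     bounded_embedding pos edge eL eR \<and>
     (\<forall>F\<in>bounded_faces pos edge eL eR. left_bd pos F \<inter> Ahat A \<noteq> {} \<longrightarrow>
        face_min pos F \<in> Ahat A \<and> face_max pos F \<in> Ahat A)"

text \<open>Total (strict) orders L on set ps \<union> set qs extending both decreasing chains;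
  (a, b) \<in> L means a is below b.\<close>
definition chain_exts :: "'a ext list \<Rightarrow> 'a ext list \<Rightarrow> ('a ext \<times> 'a ext) set set" where
  "chain_exts ps qs =
     {L. L \<subseteq> (set ps \<union> set qs) \<times> (set ps \<union> set qs) \<and>
         strict_linear_order_on (set ps \<union> set qs) L \<and>
         (\<forall>i. Suc i < length ps \<longrightarrow> (ps ! Suc i, ps ! i) \<in> L) \<and>
         (\<forall>i. Suc i < length qs \<longrightarrow> (qs ! Suc i, qs ! i) \<in> L)}"

definition gen_rel :: "('a::order ext \<times> 'a ext) set \<Rightarrow> ('a ext \<times> 'a ext) set" where
  "gen_rel L = (hrel \<union> L)\<^sup>+"

end

theory Submission
  imports Defs
begin

lemma HLE_REFL: "hle (a::'a::order ext) a"
  by (cases a) auto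

lemma HLE_TRANS: "hle (a::'a::order ext) b \<Longrightarrow> hle b c \<Longrightarrow> hle a c"
  by (cases a; cases b; cases c) auto

lemma HLE_ANTI: "hle (a::'a::order ext) b \<Longrightarrow> hle b a \<Longrightarrow> a = b"
  by (cases a; cases b) auto

lemma HLT_TRANS: "hlt (a::'a::order ext) b \<Longrightarrow> hlt b c \<Longrightarrow> hlt a c"
  unfolding hlt_def using HLE_TRANS HLE_ANTI by metis

lemma HLT_IRR: "\<not> hlt (a::'a::order ext) a"
  unfolding hlt_def by simp

lemma hrelI: "hlt a b \<Longrightarrow> (a, b) \<in> hrel"
  by (simp add: hrel_def)

lemma mono_trancl:
  assumes "\<forall>(p, q)\<in>R. (x::real^'b) $ p \<le> x $ q" and "(a, b) \<in> R\<^sup>+"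
  shows "x $ a \<le> x $ b"
  using assms(2) by (induction rule: trancl_induct) (use assms(1) in force)+

lemma op_gen:
  "order_poly (gen_rel L) B mu = {x \<in> order_poly hrel B mu. \<forall>(p, q)\<in>L. x $ p \<le> x $ q}"
proof -
  have "(\<forall>(p, q)\<in>(hrel \<union> L)\<^sup>+. x $ p \<le> x $ q) \<longleftrightarrow>
        (\<forall>(p, q)\<in>hrel. x $ p \<le> x $ q) \<and> (\<forall>(p, q)\<in>L. x $ p \<le> x $ q)" for x :: "real^'a ext"
  proof
    assume "\<forall>(p, q)\<in>(hrel \<union> L)\<^sup>+. x $ p \<le> x $ q"
    then show "(\<forall>(p, q)\<in>hrel. x $ p \<le> x $ q) \<and> (\<forall>(p, q)\<in>L. x $ p \<le> x $ q)"
      by auto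
  next
    assume "(\<forall>(p, q)\<in>hrel. x $ p \<le> x $ q) \<and> (\<forall>(p, q)\<in>L. x $ p \<le> x $ q)"
    then have "\<forall>(p, q)\<in>hrel \<union> L. x $ p \<le> x $ q" by auto
    then show "\<forall>(p, q)\<in>(hrel \<union> L)\<^sup>+. x $ p \<le> x $ q"
      using mono_trancl by blast
  qed
  then show ?thesis unfolding order_poly_def gen_rel_def by auto
qed

lemma convex_op:
  fixes R :: "('b::finite \<times> 'b) set"
  shows "convex (order_poly R B mu)"
  unfolding convex_def
proof (intro ballI allI impI)
  fix x y :: "real^'b" and u v :: real
  assume xx: "x \<in> order_poly R B mu" and yy: "y \<in> order_poly R B mu"
    and uv: "0 \<le> u" "0 \<le> v" "u + v = 1"
  have x: "(\<forall>(p, q)\<in>R. x $ p \<le> x $ q) \<and> (\<forall>b\<in>B. x $ b = mu b)" using xx by (simp add: order_poly_def)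
  have y: "(\<forall>(p, q)\<in>R. y $ p \<le> y $ q) \<and> (\<forall>b\<in>B. y $ b = mu b)" using yy by (simp add: order_poly_def)
  have 1: "\<forall>(p, q)\<in>R. u * x $ p + v * y $ p \<le> u * x $ q + v * y $ q"
  proof clarify
    fix p q assume "(p, q) \<in> R"
    then have "x $ p \<le> x $ q" "y $ p \<le> y $ q" using x y by auto
    then show "u * x $ p + v * y $ p \<le> u * x $ q + v * y $ q"
      using uv by (meson add_mono mult_left_mono)
  qed
  have 2: "\<forall>b\<in>B. u * x $ b + v * y $ b = mu b"
    using x y uv by (metis distrib_right mult_1)
  show "u *\<^sub>R x + v *\<^sub>R y \<in> order_poly R B mu"
    using 1 2 by (simp add: order_poly_def)
qed

lemma face_lemma:
  assumes L1: "strict_linear_order_on S L1" "L1 \<subseteq> S \<times> S"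
    and L2: "strict_linear_order_on S L2" "L2 \<subseteq> S \<times> S"
  shows "(order_poly (gen_rel L1) B mu \<inter> order_poly (gen_rel L2) B mu)
           face_of order_poly (gen_rel L1) B mu"
proof -
  let ?O1 = "order_poly (gen_rel L1) B mu"
  let ?O2 = "order_poly (gen_rel L2) B mu"
  define D where "D = {(p, q) \<in> L1. (q, p) \<in> L2}"
  have fD: "finite D" by (rule finite_subset[of _ UNIV]) auto
  define c :: "real^'a ext" where "c = (\<Sum>(p, q)\<in>D. axis p 1 - axis q 1)"
  have cy: "c \<bullet> y = (\<Sum>(p, q)\<in>D. y $ p - y $ q)" for y :: "real^'a ext"
    unfolding c_def inner_sum_left
    by (rule sum.cong) (auto simp: inner_diff_left inner_commute[of "axis _ _"] cart_eq_inner_axis[symmetric])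
  have le: "c \<bullet> y \<le> 0" if "y \<in> ?O1" for y
  proof -
    have "\<forall>(p, q)\<in>L1. y $ p \<le> y $ q" using that by (simp add: op_gen)
    then show ?thesis unfolding cy by (intro sum_nonpos) (auto simp: D_def)
  qed
  have eq: "?O1 \<inter> ?O2 = ?O1 \<inter> {y. c \<bullet> y = 0}"
  proof (intro set_eqI iffI)
    fix y assume y: "y \<in> ?O1 \<inter> ?O2"
    have "\<forall>(p, q)\<in>L1. y $ p \<le> y $ q" "\<forall>(p, q)\<in>L2. y $ p \<le> y $ q"
      using y by (auto simp: op_gen)
    then have "\<forall>(p, q)\<in>D. y $ p - y $ q = 0" by (fastforce simp: D_def)
    then have "c \<bullet> y = 0" unfolding cy by (intro sum.neutral) auto
    then show "y \<in> ?O1 \<inter> {y. c \<bullet> y = 0}" using y by auto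
  next
    fix y assume y: "y \<in> ?O1 \<inter> {y. c \<bullet> y = 0}"
    have m1: "\<forall>(p, q)\<in>L1. y $ p \<le> y $ q" using y by (auto simp: op_gen)
    have "(\<Sum>(p, q)\<in>D. y $ p - y $ q) = 0" using y cy by auto
    then have "(\<Sum>pq\<in>D. (case pq of (p, q) \<Rightarrow> y $ q - y $ p)) = 0"
      by (simp add: split_def sum_subtractf)
    moreover have "\<forall>pq\<in>D. 0 \<le> (case pq of (p, q) \<Rightarrow> y $ q - y $ p)"
      using m1 by (auto simp: D_def)
    ultimately have z0: "\<forall>pq\<in>D. (case pq of (p, q) \<Rightarrow> y $ q - y $ p) = 0"
      using sum_nonneg_eq_0_iff[OF fD] by blast
    have z: "\<forall>pq\<in>D. (case pq of (p, q) \<Rightarrow> y $ p - y $ q) = 0"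
      using z0 by auto
    have "\<forall>(p, q)\<in>L2. y $ p \<le> y $ q"
    proof clarify
      fix a b assume ab: "(a, b) \<in> L2"
      then have "a \<in> S" "b \<in> S" using L2 by auto
      moreover have "a \<noteq> b" using ab L2 unfolding strict_linear_order_on_def irrefl_def by auto
      ultimately have "(a, b) \<in> L1 \<or> (b, a) \<in> L1"
        using L1 unfolding strict_linear_order_on_def total_on_def by auto
      then show "y $ a \<le> y $ b"
      proof
        assume "(b, a) \<in> L1"
        then have "(b, a) \<in> D" using ab by (auto simp: D_def)
        then show ?thesis using z by fastforce
      qed (use m1 in auto)
    qed
    then show "y \<in> ?O1 \<inter> ?O2" using y by (auto simp: op_gen)
  qed
  show ?thesis unfolding eq
    by (rule face_of_Int_supporting_hyperplane_le[OF convex_op]) (use le in auto)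
qed

theorem lemma5p2:
  fixes A :: "'a::{finite,order} set" and lam :: "'a \<Rightarrow> real"
    and pos :: "'a ext \<Rightarrow> complex" and edge :: "'a ext \<Rightarrow> 'a ext \<Rightarrow> real \<Rightarrow> complex"
    and eL eR :: "real \<Rightarrow> complex" and F :: "complex set"
    and ps qs :: "'a ext list"
  assumes "marked_poset A lam"
    and "bounded_spe A pos edge eL eR"
    and "F \<in> bounded_faces pos edge eL eR"
    and "\<not> face_has_edge edge eL eR F LeftE" and "\<not> face_has_edge edge eL eR F RightE"
    and "ps \<noteq> []" and "qs \<noteq> []"
    and "set ps = left_bd pos F" and "sorted_wrt (\<lambda>a b. hlt b a) ps"
    and "set qs = right_bd pos F" and "sorted_wrt (\<lambda>a b. hlt b a) qs"
    and "hd qs = hd ps" and "last qs = last ps"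
  shows "(\<Union>L\<in>chain_exts ps qs. order_poly (gen_rel L) (Ahat A) (lamhat A lam))
           = order_poly hrel (Ahat A) (lamhat A lam)
       \<and> (\<forall>L1\<in>chain_exts ps qs. \<forall>L2\<in>chain_exts ps qs. L1 \<noteq> L2 \<longrightarrow>
           (order_poly (gen_rel L1) (Ahat A) (lamhat A lam) \<inter>
            order_poly (gen_rel L2) (Ahat A) (lamhat A lam))
              face_of order_poly (gen_rel L1) (Ahat A) (lamhat A lam)
         \<and> (order_poly (gen_rel L1) (Ahat A) (lamhat A lam) \<inter>
            order_poly (gen_rel L2) (Ahat A) (lamhat A lam))
              face_of order_poly (gen_rel L2) (Ahat A) (lamhat A lam))"
proof -
  let ?S = "set ps \<union> set qs"
  have ce: "L \<subseteq> ?S \<times> ?S \<and> strict_linear_order_on ?S L" if "L \<in> chain_exts ps qs" for L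
    using that unfolding chain_exts_def by blast
  have part1: "(\<Union>L\<in>chain_exts ps qs. order_poly (gen_rel L) (Ahat A) (lamhat A lam))
           = order_poly hrel (Ahat A) (lamhat A lam)"
  proof (intro equalityI subsetI)
    fix x assume "x \<in> (\<Union>L\<in>chain_exts ps qs. order_poly (gen_rel L) (Ahat A) (lamhat A lam))"
    then obtain L where "x \<in> order_poly (gen_rel L) (Ahat A) (lamhat A lam)" by blast
    then show "x \<in> order_poly hrel (Ahat A) (lamhat A lam)" by (simp add: op_gen)
  next
    fix x assume x: "x \<in> order_poly hrel (Ahat A) (lamhat A lam)"
    have xm: "x $ a \<le> x $ b" if "hlt a b" for a b
    proof -
      have H: "\<forall>(p, q)\<in>hrel. x $ p \<le> x $ q" using x by (simp add: order_poly_def)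
      have "(a, b) \<in> hrel" using that by (rule hrelI)
      from bspec[OF H this] show ?thesis by (rule case_prodD)
    qed
    obtain f :: "'a ext \<Rightarrow> nat" where f: "inj f"
      using finite_imp_inj_to_nat_seg[of "UNIV :: 'a ext set"] by auto
    define r :: "'a ext \<Rightarrow> nat" where "r v = card {w. hlt w v}" for v
    have rm: "r a < r b" if "hlt a b" for a b
    proof -
      have "{w. hlt w a} \<subset> {w. hlt w b}"
      proof
        show "{w. hlt w a} \<subseteq> {w. hlt w b}"
          using that HLT_TRANS by blast
        show "{w. hlt w a} \<noteq> {w. hlt w b}" using that HLT_IRR by blast
      qed
      then show ?thesis unfolding r_def using psubset_card_mono[OF finite] by blast
    qed
    define klt where "klt a b \<longleftrightarrow> x $ a < x $ b \<or> (x $ a = x $ b \<and> (r a < r b \<or> (r a = r b \<and> f a < f b)))" for a b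
    have fi: "f a = f b \<Longrightarrow> a = b" for a b using f by (auto dest: injD)
    define L where "L = {(a, b). a \<in> ?S \<and> b \<in> ?S \<and> klt a b}"
    have chainP: "(xs ! Suc i, xs ! i) \<in> L"
      if "set xs \<subseteq> ?S" "sorted_wrt (\<lambda>a b. hlt b a) xs" "Suc i < length xs" for xs i
    proof -
      have h: "hlt (xs ! Suc i) (xs ! i)"
        using that(2,3) by (simp add: sorted_wrt_iff_nth_less)
      have "klt (xs ! Suc i) (xs ! i)"
        using xm[OF h] rm[OF h] unfolding klt_def by auto
      moreover have "xs ! Suc i \<in> ?S" "xs ! i \<in> ?S" using that(1,3) by (meson Suc_lessD nth_mem subsetD)+
      ultimately show ?thesis unfolding L_def by auto
    qed
    have "L \<in> chain_exts ps qs"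
      unfolding chain_exts_def
    proof (intro CollectI conjI allI impI)
      show "L \<subseteq> ?S \<times> ?S" unfolding L_def by auto
      show "strict_linear_order_on ?S L"
        unfolding strict_linear_order_on_def
      proof (intro conjI)
        show "trans L"
        proof (rule transI)
          fix a b c assume "(a, b) \<in> L" "(b, c) \<in> L"
          then show "(a, c) \<in> L" unfolding L_def klt_def by auto
        qed
        show "irrefl L" by (rule irreflI) (simp add: L_def klt_def)
        show "total_on ?S L"
        proof (rule total_onI)
          fix a b assume ab: "a \<in> ?S" "b \<in> ?S" "a \<noteq> b"
          have "f a \<noteq> f b" using fi ab(3) by blast
          then have "klt a b \<or> klt b a" unfolding klt_def by linarith
          then show "(a, b) \<in> L \<or> (b, a) \<in> L" using ab unfolding L_def by blast
        qed
      qed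
    next
      fix i assume i: "Suc i < length ps"
      show "(ps ! Suc i, ps ! i) \<in> L"
        by (rule chainP) (use assms(9) i in auto)
    next
      fix i assume i: "Suc i < length qs"
      show "(qs ! Suc i, qs ! i) \<in> L"
        by (rule chainP) (use assms(11) i in auto)
    qed
    moreover have "x \<in> order_poly (gen_rel L) (Ahat A) (lamhat A lam)"
    proof -
      have "\<forall>(p, q)\<in>L. x $ p \<le> x $ q"
      proof clarify
        fix p q assume "(p, q) \<in> L"
        then have "klt p q" by (simp add: L_def)
        then show "x $ p \<le> x $ q" unfolding klt_def by linarith
      qed
      then show ?thesis using x by (simp add: op_gen)
    qed
    ultimately show "x \<in> (\<Union>L\<in>chain_exts ps qs. order_poly (gen_rel L) (Ahat A) (lamhat A lam))"
      by auto
  qed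
  show ?thesis
  proof (intro conjI ballI impI part1)
    fix L1 L2 assume L1: "L1 \<in> chain_exts ps qs" and L2: "L2 \<in> chain_exts ps qs" and "L1 \<noteq> L2"
    show "(order_poly (gen_rel L1) (Ahat A) (lamhat A lam) \<inter>
            order_poly (gen_rel L2) (Ahat A) (lamhat A lam))
              face_of order_poly (gen_rel L1) (Ahat A) (lamhat A lam)"
      by (rule face_lemma[of ?S L1 L2]) (use ce[OF L1] ce[OF L2] in auto)
    have "(order_poly (gen_rel L2) (Ahat A) (lamhat A lam) \<inter>
            order_poly (gen_rel L1) (Ahat A) (lamhat A lam))
              face_of order_poly (gen_rel L2) (Ahat A) (lamhat A lam)"
      by (rule face_lemma[of ?S L2 L1]) (use ce[OF L1] ce[OF L2] in auto)
    then show "(order_poly (gen_rel L1) (Ahat A) (lamhat A lam) \<inter>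
            order_poly (gen_rel L2) (Ahat A) (lamhat A lam))
              face_of order_poly (gen_rel L2) (Ahat A) (lamhat A lam)"
      by (simp add: Int_commute)
  qed
qed

end
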